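(* Let $n\ge 2$ and $m\ge 1$, let $(\mathbb{R}^n,g_0)$ be Euclidean space with coordinates $x=(x_1,\dots,x_n)$ and metric components $(g_0)_{ij}=\delta_{ij}$, and let $(F^m,g_F)$ be a Riemannian Einstein manifold with constant Ricci curvature $\lambda_F$, i.e. $\mathrm{Ric}_{g_F}=\lambda_F g_F$. Let $f,h:\mathbb{R}^n\to\mathbb{R}$ be smooth functions with $f>0$, and suppose the warped product $M=\mathbb{R}^n\times_f F^m$ with metric $g=g_0\oplus f^2 g_F$ is a gradient Ricci soliton with potential function $h$, i.e. $\mathrm{Ric}_g+\mathrm{Hess}_g(h)=\rho g$ for a constant $\rho\in\mathbb{R}$. If $f=f(x_1)$ depends only on $x_1$, then there exist constants $a_k,b_k\in\mathbb{R}$ and a smooth function $h_1$ of one variable such that $$h(x_1,\dots,x_n)=h_1(x_1)+\sum_{k=2}^{n}\Big(\frac{\rho}{2}x_k^2+a_kx_k+b_k\Big),$$ and $h_1$ satisfies $$\begin{cases} \lambda_F-f f''-(m-1)(f')^2+f f' h_1'=\rho f^2,\\ f h_1''-m f''=\rho f, \end{cases}$$ where primes denote derivatives with respect to $x_1$.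
   Context: A warped product $B\times_f F$ is the product manifold $B\times F$ with metric $g_B\oplus f^2 g_F$, where $f:B\to\mathbb{R}$ is positive. Functions on $\mathbb{R}^n$ (such as $f$ and $h$) are identified with their lifts to $M$. *)

theory Defs
  imports "HOL-Analysis.Analysis"
begin

definition pd :: "'a::euclidean_space \<Rightarrow> ('a \<Rightarrow> real) \<Rightarrow> 'a \<Rightarrow> real" where
  "pd b \<phi> x = deriv (\<lambda>t. \<phi> (x + t *\<^sub>R b)) 0"

definition coord_smooth_on :: "'a::euclidean_space set \<Rightarrow> ('a \<Rightarrow> real) \<Rightarrow> bool" where
  "coord_smooth_on S \<phi> \<longleftrightarrow>
     (\<forall>bs. set bs \<subseteq> Basis \<longrightarrow>
        continuous_on S (foldr pd bs \<phi>) \<and>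
        (\<forall>b\<in>Basis. \<forall>x\<in>S. (\<lambda>t. foldr pd bs \<phi> (x + t *\<^sub>R b)) differentiable (at 0)))"

text \<open>A metric in coordinates: g p i j is the component g_ij at the point p
(i, j basis vectors).\<close>
definition riemannian_metric_on :: "'a::euclidean_space set \<Rightarrow> ('a \<Rightarrow> 'a \<Rightarrow> 'a \<Rightarrow> real) \<Rightarrow> bool" where
  "riemannian_metric_on U g \<longleftrightarrow> open U \<and>
     (\<forall>i\<in>Basis. \<forall>j\<in>Basis. coord_smooth_on U (\<lambda>p. g p i j) \<and> (\<forall>p\<in>U. g p i j = g p j i)) \<and>
     (\<forall>p\<in>U. \<forall>w::'a. w \<noteq> 0 \<longrightarrow> (\<Sum>i\<in>Basis. \<Sum>j\<in>Basis. (w \<bullet> i) * (w \<bullet> j) * g p i j) > 0)"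

definition metric_inv :: "('a::euclidean_space \<Rightarrow> 'a \<Rightarrow> 'a \<Rightarrow> real) \<Rightarrow> 'a \<Rightarrow> 'a \<Rightarrow> 'a \<Rightarrow> real" where
  "metric_inv g p = (THE G. (\<forall>i j. (i \<notin> Basis \<or> j \<notin> Basis) \<longrightarrow> G i j = 0) \<and>
      (\<forall>i\<in>Basis. \<forall>j\<in>Basis. (\<Sum>k\<in>Basis. g p i k * G k j) = (if i = j then 1 else 0)))"

definition christoffel :: "('a::euclidean_space \<Rightarrow> 'a \<Rightarrow> 'a \<Rightarrow> real) \<Rightarrow> 'a \<Rightarrow> 'a \<Rightarrow> 'a \<Rightarrow> 'a \<Rightarrow> real" where
  "christoffel g p k i j = (1/2) * (\<Sum>l\<in>Basis. metric_inv g p k l *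
      (pd i (\<lambda>q. g q j l) p + pd j (\<lambda>q. g q i l) p - pd l (\<lambda>q. g q i j) p))"

definition ricci :: "('a::euclidean_space \<Rightarrow> 'a \<Rightarrow> 'a \<Rightarrow> real) \<Rightarrow> 'a \<Rightarrow> 'a \<Rightarrow> 'a \<Rightarrow> real" where
  "ricci g p i j = (\<Sum>k\<in>Basis. pd k (\<lambda>q. christoffel g q k i j) p - pd j (\<lambda>q. christoffel g q k i k) p
      + (\<Sum>l\<in>Basis. christoffel g p k k l * christoffel g p l i j - christoffel g p k j l * christoffel g p l i k))"

definition hessian :: "('a::euclidean_space \<Rightarrow> 'a \<Rightarrow> 'a \<Rightarrow> real) \<Rightarrow> ('a \<Rightarrow> real) \<Rightarrow> 'a \<Rightarrow> 'a \<Rightarrow> 'a \<Rightarrow> real" where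
  "hessian g \<phi> p i j = pd i (pd j \<phi>) p - (\<Sum>k\<in>Basis. christoffel g p k i j * pd k \<phi> p)"

definition warped_metric :: "('a::euclidean_space \<Rightarrow> real) \<Rightarrow> ('b::euclidean_space \<Rightarrow> 'b \<Rightarrow> 'b \<Rightarrow> real)
    \<Rightarrow> ('a \<times> 'b) \<Rightarrow> ('a \<times> 'b) \<Rightarrow> ('a \<times> 'b) \<Rightarrow> real" where
  "warped_metric f gF p u v =
     (if snd u = 0 \<and> snd v = 0 then fst u \<bullet> fst v
      else if fst u = 0 \<and> fst v = 0 then (f (fst p))^2 * gF (snd p) (snd u) (snd v)
      else 0)"

end

theory Submission
  imports Defs
begin

lemma sum_Basis_prod:
  fixes F :: "('a::euclidean_space * 'b::euclidean_space) \<Rightarrow> real"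
  shows "(\<Sum>K\<in>Basis. F K) = (\<Sum>i\<in>Basis. F (i, 0)) + (\<Sum>i\<in>Basis. F (0, i))"
proof -
  have "inj_on (\<lambda>u. (u::'a, 0::'b)) Basis" "inj_on (\<lambda>u. (0::'a, u::'b)) Basis"
    by (auto intro!: inj_onI Pair_inject)
  moreover have "((\<lambda>u. (u::'a, 0::'b)) ` Basis) \<inter> ((\<lambda>u. (0::'a, u::'b)) ` Basis) = {}"
    by (auto simp: nonzero_Basis)
  ultimately show ?thesis
    by (simp add: Basis_prod_def sum.union_disjoint sum.reindex)
qed

lemma Basis_prod_cases:
  assumes "(K::'a::euclidean_space * 'b::euclidean_space) \<in> Basis"
  obtains k where "k \<in> Basis" "K = (k,0)" | c where "c \<in> Basis" "K = (0,c)"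
  using assms by (auto simp: Basis_prod_def)

lemma sum_delta_inner[simp]:
  fixes k :: "'a::euclidean_space"
  assumes "k \<in> Basis"
  shows "(\<Sum>l\<in>Basis. (k \<bullet> l) * F l) = F k" "(\<Sum>l\<in>Basis. (l \<bullet> k) * F l) = F k"
    "(\<Sum>l\<in>Basis. F l * (k \<bullet> l)) = F k" "(\<Sum>l\<in>Basis. F l * (l \<bullet> k)) = F k"
  using assms by (simp_all add: inner_Basis if_distrib[of "\<lambda>x. x * _"] if_distrib[of "\<lambda>x. _ * x"] sum.delta cong: if_cong)

lemma pd_has:
  "(\<lambda>t. \<phi> (x + t *\<^sub>R b)) differentiable (at 0) \<Longrightarrow>
   ((\<lambda>t. \<phi> (x + t *\<^sub>R b)) has_real_derivative pd b \<phi> x) (at 0)"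
  by (simp add: pd_def DERIV_deriv_iff_real_differentiable)

lemma pd_const[simp]: "pd b (\<lambda>x. c) x = 0"
  by (simp add: pd_def)

lemma pd_mult:
  assumes "(\<lambda>t. A (x + t *\<^sub>R b)) differentiable (at 0)" "(\<lambda>t. B (x + t *\<^sub>R b)) differentiable (at 0)"
  shows "pd b (\<lambda>x. A x * B x) x = A x * pd b B x + pd b A x * B x"
proof -
  have "((\<lambda>t. A (x + t *\<^sub>R b) * B (x + t *\<^sub>R b)) has_real_derivative
      A x * pd b B x + pd b A x * B x) (at 0)"
    using DERIV_mult[OF pd_has[OF assms(1)] pd_has[OF assms(2)]] by (simp add: algebra_simps)
  then show ?thesis unfolding pd_def by (simp add: DERIV_imp_deriv)
qed

lemma pd_cmult:
  assumes "(\<lambda>t. A (x + t *\<^sub>R b)) differentiable (at 0)"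
  shows "pd b (\<lambda>x. c * A x) x = c * pd b A x"
  using pd_mult[of "\<lambda>_. c" x b A] assms by simp

lemma pd_divide:
  assumes "(\<lambda>t. A (x + t *\<^sub>R b)) differentiable (at 0)" "(\<lambda>t. B (x + t *\<^sub>R b)) differentiable (at 0)"
    "B x \<noteq> 0"
  shows "pd b (\<lambda>x. A x / B x) x = (pd b A x * B x - A x * pd b B x) / (B x)^2"
proof -
  have "((\<lambda>t. A (x + t *\<^sub>R b) / B (x + t *\<^sub>R b)) has_real_derivative
      (pd b A x * B (x + 0 *\<^sub>R b) - A (x + 0 *\<^sub>R b) * pd b B x) / (B (x + 0 *\<^sub>R b) * B (x + 0 *\<^sub>R b))) (at 0)"
    by (rule DERIV_divide[OF pd_has[OF assms(1)] pd_has[OF assms(2)]]) (simp add: assms)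
  then show ?thesis unfolding pd_def by (simp add: DERIV_imp_deriv power2_eq_square)
qed

lemma pd_local:
  assumes "open S" "p \<in> S" "\<And>q. q \<in> S \<Longrightarrow> \<phi> q = \<psi> q"
  shows "pd b \<phi> p = pd b \<psi> p"
proof -
  have c: "continuous_on UNIV (\<lambda>t::real. p + t *\<^sub>R b)" by (intro continuous_intros)
  have "open ((\<lambda>t::real. p + t *\<^sub>R b) -` S)"
    using c assms(1) by (simp add: open_vimage)
  moreover have "0 \<in> (\<lambda>t::real. p + t *\<^sub>R b) -` S" using assms(2) by simp
  ultimately have "eventually (\<lambda>t. t \<in> (\<lambda>t::real. p + t *\<^sub>R b) -` S) (nhds 0)"
    by (rule eventually_nhds_in_open)
  then have "eventually (\<lambda>t. p + t *\<^sub>R b \<in> S) (nhds 0)" by simp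
  then have "eventually (\<lambda>t. \<phi> (p + t *\<^sub>R b) = \<psi> (p + t *\<^sub>R b)) (nhds 0)"
    by eventually_elim (simp add: assms(3))
  then show ?thesis unfolding pd_def by (rule deriv_cong_ev) simp
qed

lemma pd_fst[simp]: "pd (u,0) (\<lambda>q. \<phi> (fst q)) (x,y) = pd u \<phi> x"
  by (simp add: pd_def)
lemma pd_fst0[simp]: "pd (0,v) (\<lambda>q. \<phi> (fst q)) (x,y) = 0"
  by (simp add: pd_def)
lemma pd_snd[simp]: "pd (0,v) (\<lambda>q. \<phi> (snd q)) (x,y) = pd v \<phi> y"
  by (simp add: pd_def)
lemma pd_snd0[simp]: "pd (u,0) (\<lambda>q. \<phi> (snd q)) (x,y) = 0"
  by (simp add: pd_def)

lemma deriv_shift0: "deriv (\<lambda>s. g (t + s)) 0 = deriv g (t::real)"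
  unfolding deriv_def using DERIV_shift[of g _ 0 t] by (simp add: add.commute)

lemma line_deriv:
  assumes "\<And>z. (\<lambda>t. \<phi> (z + t *\<^sub>R e)) differentiable (at 0)"
  shows "((\<lambda>s. \<phi> (x + s *\<^sub>R e)) has_real_derivative pd e \<phi> (x + s *\<^sub>R e)) (at s)"
proof -
  have "((\<lambda>t. \<phi> ((x + s *\<^sub>R e) + t *\<^sub>R e)) has_real_derivative pd e \<phi> (x + s *\<^sub>R e)) (at 0)"
    by (rule pd_has[OF assms])
  then have "((\<lambda>t. \<phi> (x + (t + s) *\<^sub>R e)) has_real_derivative pd e \<phi> (x + s *\<^sub>R e)) (at 0)"
    by (simp add: scaleR_add_left add.assoc add.commute add.left_commute)
  then show ?thesis using DERIV_shift[of "\<lambda>s. \<phi> (x + s *\<^sub>R e)" _ 0 s] by simp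
qed

lemma sum_delta_if1:
  assumes "(k::'c::euclidean_space) \<in> Basis"
  shows "(\<Sum>l\<in>Basis. (if k = l then 1 else 0) * (F l::real)) = F k"
proof -
  have "(\<Sum>l\<in>Basis. (if k = l then 1 else 0) * (F l::real)) = (\<Sum>l\<in>Basis. if k = l then F l else 0)"
    by (rule sum.cong) auto
  then show ?thesis using assms by (simp add: sum.delta)
qed

lemma sum_delta_if2:
  assumes "(k::'c::euclidean_space) \<in> Basis"
  shows "(\<Sum>l\<in>Basis. (F l::real) * (if l = k then 1 else 0)) = F k"
proof -
  have "(\<Sum>l\<in>Basis. (F l::real) * (if l = k then 1 else 0)) = (\<Sum>l\<in>Basis. if k = l then F l else 0)"
    by (rule sum.cong) auto
  then show ?thesis using assms by (simp add: sum.delta)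
qed

lemma metric_inv_eq:
  fixes g :: "'c::euclidean_space \<Rightarrow> 'c \<Rightarrow> 'c \<Rightarrow> real"
  assumes zero: "\<And>i j. (i \<notin> Basis \<or> j \<notin> Basis) \<Longrightarrow> Y i j = 0"
  and right: "\<And>i j. i\<in>Basis \<Longrightarrow> j\<in>Basis \<Longrightarrow> (\<Sum>k\<in>Basis. g p i k * Y k j) = (if i = j then 1 else 0)"
  and left: "\<And>i j. i\<in>Basis \<Longrightarrow> j\<in>Basis \<Longrightarrow> (\<Sum>k\<in>Basis. Y i k * g p k j) = (if i = j then 1 else 0)"
  shows "metric_inv g p = Y"
  unfolding metric_inv_def
proof (rule the_equality)
  show "(\<forall>i j. i \<notin> Basis \<or> j \<notin> Basis \<longrightarrow> Y i j = 0) \<and>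
    (\<forall>i\<in>Basis. \<forall>j\<in>Basis. (\<Sum>k\<in>Basis. g p i k * Y k j) = (if i = j then 1 else 0))"
    using zero right by blast
next
  fix G assume G: "(\<forall>i j. i \<notin> Basis \<or> j \<notin> Basis \<longrightarrow> G i j = 0) \<and>
    (\<forall>i\<in>Basis. \<forall>j\<in>Basis. (\<Sum>k\<in>Basis. g p i k * G k j) = (if i = j then 1 else 0))"
  then have G1: "\<And>i j. i \<notin> Basis \<or> j \<notin> Basis \<Longrightarrow> G i j = 0"
    and G2: "\<And>i j. i\<in>Basis \<Longrightarrow> j\<in>Basis \<Longrightarrow> (\<Sum>k\<in>Basis. g p i k * G k j) = (if i = j then 1 else 0)"
    by blast+
  show "G = Y"
  proof (intro ext)
    fix i j
    show "G i j = Y i j"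
    proof (cases "i \<in> Basis \<and> j \<in> Basis")
      case False
      then show ?thesis using G1 zero by metis
    next
      case True
      have "G i j = (\<Sum>k\<in>Basis. (if i = k then 1 else 0) * G k j)"
        using True by (simp only: sum_delta_if1)
      also have "\<dots> = (\<Sum>k\<in>Basis. (\<Sum>l\<in>Basis. Y i l * g p l k) * G k j)"
        using True left by (intro sum.cong) auto
      also have "\<dots> = (\<Sum>k\<in>Basis. \<Sum>l\<in>Basis. Y i l * (g p l k * G k j))"
        by (simp only: sum_distrib_right mult.assoc)
      also have "\<dots> = (\<Sum>l\<in>Basis. \<Sum>k\<in>Basis. Y i l * (g p l k * G k j))"
        by (rule sum.swap)
      also have "\<dots> = (\<Sum>l\<in>Basis. Y i l * (\<Sum>k\<in>Basis. g p l k * G k j))"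
        by (simp only: sum_distrib_left)
      also have "\<dots> = (\<Sum>l\<in>Basis. Y i l * (if l = j then 1 else 0))"
        using G2 True by (intro sum.cong) auto
      also have "\<dots> = Y i j" using True by (simp only: sum_delta_if2)
      finally show ?thesis .
    qed
  qed
qed

lemma metric_inv_exists:
  fixes g :: "'c::euclidean_space \<Rightarrow> 'c \<Rightarrow> real"
  assumes pos: "\<And>w::'c. w \<noteq> 0 \<Longrightarrow> (\<Sum>i\<in>Basis. \<Sum>j\<in>Basis. (w \<bullet> i) * (w \<bullet> j) * g i j) > 0"
  shows "\<exists>Y. (\<forall>i j. (i \<notin> Basis \<or> j \<notin> Basis) \<longrightarrow> Y i j = 0) \<and>
    (\<forall>i\<in>Basis. \<forall>j\<in>Basis. (\<Sum>k\<in>Basis. g i k * Y k j) = (if i = j then 1 else 0)) \<and>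
    (\<forall>i\<in>Basis. \<forall>j\<in>Basis. (\<Sum>k\<in>Basis. Y i k * g k j) = (if i = j then 1 else 0))"
proof -
  define L where "L = (\<lambda>w::'c. \<Sum>i\<in>Basis. (\<Sum>j\<in>Basis. g i j * (w \<bullet> j)) *\<^sub>R i)"
  have Li: "L w \<bullet> i = (\<Sum>j\<in>Basis. g i j * (w \<bullet> j))" if "i \<in> Basis" for w i
    using that by (simp add: L_def inner_sum_left)
  have linL: "linear L"
    unfolding L_def
    by (intro bounded_linear.linear bounded_linear_intros)
  have injL: "inj L"
  proof (rule linear_inj_iff_eq_0[OF linL, THEN iffD2], intro allI impI)
    fix w assume "L w = 0"
    then have "(\<Sum>i\<in>Basis. (w \<bullet> i) * (L w \<bullet> i)) = 0" by simp
    then have "(\<Sum>i\<in>Basis. \<Sum>j\<in>Basis. (w \<bullet> i) * (w \<bullet> j) * g i j) = 0"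
      by (simp add: Li sum_distrib_left mult_ac)
    then show "w = 0" using pos[of w] by (cases "w = 0") auto
  qed
  from linear_injective_isomorphism[OF linL injL]
  obtain M where lM: "linear M" and MiL: "\<forall>x. M (L x) = x" and LiM: "\<forall>x. L (M x) = x"
    by auto
  define Y where "Y = (\<lambda>i j. if i \<in> Basis \<and> j \<in> Basis then M j \<bullet> i else 0)"
  have Lj: "L j = (\<Sum>k\<in>Basis. g k j *\<^sub>R k)" if "j \<in> Basis" for j
    using that by (simp add: L_def)
  show ?thesis
  proof (intro exI conjI ballI allI impI)
    fix i j :: 'c assume "i \<notin> Basis \<or> j \<notin> Basis" then show "Y i j = 0" by (auto simp: Y_def)
  next
    fix i j :: 'c assume ij: "i \<in> Basis" "j \<in> Basis"
    have "(\<Sum>k\<in>Basis. g i k * Y k j) = (\<Sum>k\<in>Basis. g i k * (M j \<bullet> k))"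
      using ij by (simp add: Y_def)
    also have "\<dots> = L (M j) \<bullet> i" using ij by (simp add: Li)
    also have "\<dots> = (if i = j then 1 else 0)" using ij by (simp add: LiM inner_Basis)
    finally show "(\<Sum>k\<in>Basis. g i k * Y k j) = (if i = j then 1 else 0)" .
  next
    fix i j :: 'c assume ij: "i \<in> Basis" "j \<in> Basis"
    have "(\<Sum>k\<in>Basis. Y i k * g k j) = (\<Sum>k\<in>Basis. g k j * (M k \<bullet> i))"
      using ij by (simp add: Y_def mult.commute)
    also have "\<dots> = M (\<Sum>k\<in>Basis. g k j *\<^sub>R k) \<bullet> i"
      by (simp add: linear_sum[OF lM] linear_scale[OF lM] inner_sum_left)
    also have "\<dots> = (if i = j then 1 else 0)" using ij by (simp add: Lj[symmetric] MiL inner_Basis)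
    finally show "(\<Sum>k\<in>Basis. Y i k * g k j) = (if i = j then 1 else 0)" .
  qed
qed

lemma inner_Basis_neq[simp]: "(k::'c::euclidean_space) \<in> Basis \<Longrightarrow> j \<in> Basis \<Longrightarrow> k \<noteq> j \<Longrightarrow> k \<bullet> j = 0"
  by (simp add: inner_Basis)
lemma inner_Basis_same[simp]: "(k::'c::euclidean_space) \<in> Basis \<Longrightarrow> k \<bullet> k = 1"
  by (simp add: inner_Basis)

locale WP =
  fixes f h :: "'a::euclidean_space \<Rightarrow> real" and gF :: "'b::euclidean_space \<Rightarrow> 'b \<Rightarrow> 'b \<Rightarrow> real"
    and U :: "'b set"
  assumes rm: "riemannian_metric_on U gF" and fs: "coord_smooth_on UNIV f"
    and hs: "coord_smooth_on UNIV h" and fpos: "\<And>x. f x > 0"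
begin

abbreviation "G \<equiv> warped_metric f gF"

lemma f_d: "b \<in> Basis \<Longrightarrow> (\<lambda>t. f (x + t *\<^sub>R b)) differentiable (at 0)"
  using fs unfolding coord_smooth_on_def by (metis empty_subsetI empty_set foldr_Nil id_apply UNIV_I)

lemma pdf_d: assumes "a \<in> Basis" "b \<in> Basis" shows "(\<lambda>t. pd a f (x + t *\<^sub>R b)) differentiable (at 0)"
proof -
  have "set [a] \<subseteq> Basis" using assms by simp
  then have "\<forall>b\<in>Basis. \<forall>x\<in>UNIV. (\<lambda>t. foldr pd [a] f (x + t *\<^sub>R b)) differentiable (at 0)"
    using fs unfolding coord_smooth_on_def by blast
  then show ?thesis using assms by simp
qed

lemma h_d: "b \<in> Basis \<Longrightarrow> (\<lambda>t. h (x + t *\<^sub>R b)) differentiable (at 0)"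
  using hs unfolding coord_smooth_on_def by (metis empty_subsetI empty_set foldr_Nil id_apply UNIV_I)

lemma pdh_d: assumes "a \<in> Basis" "b \<in> Basis" shows "(\<lambda>t. pd a h (x + t *\<^sub>R b)) differentiable (at 0)"
proof -
  have "set [a] \<subseteq> Basis" using assms by simp
  then have "\<forall>b\<in>Basis. \<forall>x\<in>UNIV. (\<lambda>t. foldr pd [a] h (x + t *\<^sub>R b)) differentiable (at 0)"
    using hs unfolding coord_smooth_on_def by blast
  then show ?thesis using assms by simp
qed

lemma gF_d: assumes "y \<in> U" "b \<in> Basis" "c \<in> Basis" "d \<in> Basis"
  shows "(\<lambda>t. gF (y + t *\<^sub>R b) c d) differentiable (at 0)"
proof -
  have "coord_smooth_on U (\<lambda>p. gF p c d)" using rm assms unfolding riemannian_metric_on_def by blast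
  then have "\<forall>b\<in>Basis. \<forall>x\<in>U. (\<lambda>t. foldr pd [] (\<lambda>p. gF p c d) (x + t *\<^sub>R b)) differentiable (at 0)"
    unfolding coord_smooth_on_def by (metis empty_subsetI empty_set)
  then show ?thesis using assms by simp
qed

lemma U_open: "open U" using rm by (simp add: riemannian_metric_on_def)

lemma gF_sym: "y \<in> U \<Longrightarrow> c \<in> Basis \<Longrightarrow> d \<in> Basis \<Longrightarrow> gF y c d = gF y d c"
  using rm by (simp add: riemannian_metric_on_def)

lemma gF_pos: "y \<in> U \<Longrightarrow> w \<noteq> 0 \<Longrightarrow> (\<Sum>i\<in>Basis. \<Sum>j\<in>Basis. (w \<bullet> i) * (w \<bullet> j) * gF y i j) > 0"
  using rm by (simp add: riemannian_metric_on_def)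

lemma gF_diag_pos: "y \<in> U \<Longrightarrow> c \<in> Basis \<Longrightarrow> gF y c c > 0"
proof -
  assume y: "y \<in> U" and c: "c \<in> Basis"
  have "(\<Sum>i\<in>Basis. \<Sum>j\<in>Basis. (c \<bullet> i) * (c \<bullet> j) * gF y i j) = (\<Sum>i\<in>Basis. (c \<bullet> i) * (\<Sum>j\<in>Basis. (c \<bullet> j) * gF y i j))"
    by (simp add: sum_distrib_left mult.assoc)
  also have "\<dots> = gF y c c" using c by simp
  finally show ?thesis using gF_pos[OF y, of c] c by (simp add: nonzero_Basis)
qed

abbreviation "gFi \<equiv> metric_inv gF"

lemma gFi_props:
  assumes y: "y \<in> U"
  shows "\<And>i j. (i \<notin> Basis \<or> j \<notin> Basis) \<Longrightarrow> gFi y i j = 0"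
    "\<And>i j. i\<in>Basis \<Longrightarrow> j\<in>Basis \<Longrightarrow> (\<Sum>k\<in>Basis. gF y i k * gFi y k j) = (if i = j then 1 else 0)"
    "\<And>i j. i\<in>Basis \<Longrightarrow> j\<in>Basis \<Longrightarrow> (\<Sum>k\<in>Basis. gFi y i k * gF y k j) = (if i = j then 1 else 0)"
proof -
  obtain Y where Y: "(\<forall>i j. (i \<notin> Basis \<or> j \<notin> Basis) \<longrightarrow> Y i j = 0)"
    "(\<forall>i\<in>Basis. \<forall>j\<in>Basis. (\<Sum>k\<in>Basis. gF y i k * Y k j) = (if i = j then 1 else 0))"
    "(\<forall>i\<in>Basis. \<forall>j\<in>Basis. (\<Sum>k\<in>Basis. Y i k * gF y k j) = (if i = j then 1 else 0))"
    using metric_inv_exists[of "gF y"] gF_pos[OF y] by blast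
  have "gFi y = Y" by (rule metric_inv_eq) (use Y in blast)+
  then show "\<And>i j. (i \<notin> Basis \<or> j \<notin> Basis) \<Longrightarrow> gFi y i j = 0"
    "\<And>i j. i\<in>Basis \<Longrightarrow> j\<in>Basis \<Longrightarrow> (\<Sum>k\<in>Basis. gF y i k * gFi y k j) = (if i = j then 1 else 0)"
    "\<And>i j. i\<in>Basis \<Longrightarrow> j\<in>Basis \<Longrightarrow> (\<Sum>k\<in>Basis. gFi y i k * gF y k j) = (if i = j then 1 else 0)"
    using Y by auto
qed

lemma G_bb[simp]: "G q (i,0) (j,0) = i \<bullet> j"
  by (simp add: warped_metric_def)
lemma G_bf[simp]: "i \<in> Basis \<Longrightarrow> d \<in> Basis \<Longrightarrow> G q (i,0) (0,d) = 0"
  by (simp add: warped_metric_def nonzero_Basis)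
lemma G_fb[simp]: "c \<in> Basis \<Longrightarrow> j \<in> Basis \<Longrightarrow> G q (0,c) (j,0) = 0"
  by (simp add: warped_metric_def nonzero_Basis)
lemma G_ff[simp]: "c \<in> Basis \<Longrightarrow> G q (0,c) (0,d) = (f (fst q))\<^sup>2 * gF (snd q) c d"
  by (simp add: warped_metric_def nonzero_Basis)

definition GI where
  "GI q K L = (if K \<in> Basis \<and> L \<in> Basis then
     (if snd K = 0 \<and> snd L = 0 then fst K \<bullet> fst L
      else if fst K = 0 \<and> fst L = 0 then gFi (snd q) (snd K) (snd L) / (f (fst q))\<^sup>2 else 0) else 0)"

lemma GI_bb[simp]: "i \<in> Basis \<Longrightarrow> j \<in> Basis \<Longrightarrow> GI q (i,0) (j,0) = i \<bullet> j"
  by (simp add: GI_def Basis_prod_def)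
lemma GI_bf[simp]: "i \<in> Basis \<Longrightarrow> d \<in> Basis \<Longrightarrow> GI q (i,0) (0,d) = 0"
  by (simp add: GI_def Basis_prod_def nonzero_Basis)
lemma GI_fb[simp]: "c \<in> Basis \<Longrightarrow> j \<in> Basis \<Longrightarrow> GI q (0,c) (j,0) = 0"
  by (simp add: GI_def Basis_prod_def nonzero_Basis)
lemma GI_ff[simp]: "c \<in> Basis \<Longrightarrow> d \<in> Basis \<Longrightarrow> GI q (0,c) (0,d) = gFi (snd q) c d / (f (fst q))\<^sup>2"
  by (simp add: GI_def Basis_prod_def nonzero_Basis)

lemma f_nz[simp]: "f x \<noteq> 0" using fpos[of x] by simp

lemma fsq_cancel[simp]: "(f x)\<^sup>2 * A * (B / (f x)\<^sup>2) = A * B" "B / (f x)\<^sup>2 * ((f x)\<^sup>2 * A) = B * A"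
  using fpos[of x] by (simp_all add: field_simps)

lemma metric_inv_G:
  assumes q: "snd q \<in> U"
  shows "metric_inv G q = GI q"
proof (rule metric_inv_eq)
  fix I J :: "'a \<times> 'b"
  assume "I \<notin> Basis \<or> J \<notin> Basis" then show "GI q I J = 0" by (auto simp: GI_def)
next
  fix I J :: "'a \<times> 'b" assume I: "I \<in> Basis" and J: "J \<in> Basis"
  note gi = gFi_props[OF q]
  show "(\<Sum>K\<in>Basis. G q I K * GI q K J) = (if I = J then 1 else 0)"
    using I J
    by (cases rule: Basis_prod_cases[OF I]; cases rule: Basis_prod_cases[OF J])
       (simp_all add: sum_Basis_prod nonzero_Basis gi(2))
next
  fix I J :: "'a \<times> 'b" assume I: "I \<in> Basis" and J: "J \<in> Basis"
  note gi = gFi_props[OF q]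
  show "(\<Sum>K\<in>Basis. GI q I K * G q K J) = (if I = J then 1 else 0)"
    using I J
    by (cases rule: Basis_prod_cases[OF I]; cases rule: Basis_prod_cases[OF J])
       (simp_all add: sum_Basis_prod nonzero_Basis gi(3))
qed

lemma pdG_ff_b[simp]: "i \<in> Basis \<Longrightarrow> pd (i,0) (\<lambda>q. (f (fst q))\<^sup>2 * gF (snd q) c d) (x,y) = 2 * f x * pd i f x * gF y c d"
proof -
  assume i: "i \<in> Basis"
  have "((\<lambda>t. (f (x + t *\<^sub>R i))\<^sup>2 * gF y c d) has_real_derivative (2 * f x * pd i f x * gF y c d)) (at 0)"
    using DERIV_mult[OF DERIV_power[OF pd_has[OF f_d[OF i]], where n=2] DERIV_const[of "gF y c d"]]
    by (simp add: power2_eq_square mult_ac)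
  then show ?thesis unfolding pd_def by (simp add: DERIV_imp_deriv)
qed

lemma pdG_ff_f[simp]: "y \<in> U \<Longrightarrow> b \<in> Basis \<Longrightarrow> c \<in> Basis \<Longrightarrow> d \<in> Basis \<Longrightarrow>
   pd (0,b) (\<lambda>q. (f (fst q))\<^sup>2 * gF (snd q) c d) (x,y) = (f x)\<^sup>2 * pd b (\<lambda>y. gF y c d) y"
proof -
  assume a: "y \<in> U" "b \<in> Basis" "c \<in> Basis" "d \<in> Basis"
  have "((\<lambda>t. (f x)\<^sup>2 * gF (y + t *\<^sub>R b) c d) has_real_derivative ((f x)\<^sup>2 * pd b (\<lambda>y. gF y c d) y)) (at 0)"
    using DERIV_cmult[OF pd_has[of "\<lambda>y. gF y c d", OF gF_d[OF a]], of "(f x)\<^sup>2"]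
    by simp
  then show ?thesis unfolding pd_def by (simp add: DERIV_imp_deriv)
qed

definition chrW where "chrW q K I J =
 (if snd K = 0 then (if fst I = 0 \<and> fst J = 0 then - f (fst q) * pd (fst K) f (fst q) * gF (snd q) (snd I) (snd J) else 0)
  else if snd I = 0 \<and> snd J = 0 then 0
  else if snd I = 0 then pd (fst I) f (fst q) / f (fst q) * (snd K \<bullet> snd J)
  else if snd J = 0 then pd (fst J) f (fst q) / f (fst q) * (snd K \<bullet> snd I)
  else christoffel gF (snd q) (snd K) (snd I) (snd J))"

lemma sum_gFi_gF:
  assumes y: "y \<in> U" and c: "c \<in> Basis" and a: "a \<in> Basis"
  shows "(\<Sum>i\<in>Basis. gFi y c i * (Z * gF y a i) / W) = Z * (c \<bullet> a) / W"
proof -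
  have "(\<Sum>i\<in>Basis. gFi y c i * (Z * gF y a i) / W) = (\<Sum>i\<in>Basis. Z / W * (gFi y c i * gF y i a))"
    using y a by (intro sum.cong refl) (simp add: gF_sym)
  also have "\<dots> = Z / W * (\<Sum>i\<in>Basis. gFi y c i * gF y i a)" by (simp add: sum_distrib_left)
  also have "\<dots> = Z * (c \<bullet> a) / W" using gFi_props(3)[OF y c a] c a by (simp add: inner_Basis)
  finally show ?thesis .
qed

lemma chr_eq:
  assumes y: "y \<in> U" and K: "K \<in> Basis" and I: "I \<in> Basis" and J: "J \<in> Basis"
  shows "christoffel G (x,y) K I J = chrW (x,y) K I J"
  using K I J
  apply (cases rule: Basis_prod_cases[OF K]; cases rule: Basis_prod_cases[OF I]; cases rule: Basis_prod_cases[OF J])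
  apply (simp_all add: christoffel_def metric_inv_G y sum_Basis_prod chrW_def nonzero_Basis)
  subgoal by (simp add: sum_negf)
  subgoal by (subst sum_gFi_gF[OF y]; simp add: power2_eq_square)
  subgoal by (subst sum_gFi_gF[OF y]; simp add: power2_eq_square)
  subgoal by (rule sum.cong) (simp_all add: field_simps)
  done

lemma chr_eq'[simp]: "snd q \<in> U \<Longrightarrow> K \<in> Basis \<Longrightarrow> I \<in> Basis \<Longrightarrow> J \<in> Basis \<Longrightarrow>
   christoffel G q K I J = chrW q K I J"
  using chr_eq[of "snd q" K I J "fst q"] by simp

lemma Basis_b[simp]: "((k::'a), (0::'b)) \<in> Basis \<longleftrightarrow> k \<in> Basis"
  by (auto simp: Basis_prod_def nonzero_Basis)
lemma Basis_f[simp]: "((0::'a), (c::'b)) \<in> Basis \<longleftrightarrow> c \<in> Basis"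
  by (auto simp: Basis_prod_def nonzero_Basis)

lemma pd_pair_b[simp]: "pd (u, 0) \<phi> (x, y) = pd u (\<lambda>x'. \<phi> (x', y)) x"
  by (simp add: pd_def)
lemma pd_pair_f[simp]: "pd (0, v) \<phi> (x, y) = pd v (\<lambda>y'. \<phi> (x, y')) y"
  by (simp add: pd_def)

lemma pd_chr_f[simp]: "y \<in> U \<Longrightarrow> K \<in> Basis \<Longrightarrow> I \<in> Basis \<Longrightarrow> J \<in> Basis \<Longrightarrow>
   pd b (\<lambda>y'. christoffel G (x,y') K I J) y = pd b (\<lambda>y'. chrW (x,y') K I J) y"
  by (rule pd_local[OF U_open]) auto

lemma cW_bbb[simp]: "k \<in> Basis \<Longrightarrow> i \<in> Basis \<Longrightarrow> chrW q (k,0) (i,0) (j,0) = 0"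
  by (simp add: chrW_def nonzero_Basis)
lemma cW_bbf[simp]: "k \<in> Basis \<Longrightarrow> i \<in> Basis \<Longrightarrow> chrW q (k,0) (i,0) (0,b) = 0"
  by (simp add: chrW_def nonzero_Basis)
lemma cW_bfb[simp]: "k \<in> Basis \<Longrightarrow> j \<in> Basis \<Longrightarrow> chrW q (k,0) (0,a) (j,0) = 0"
  by (simp add: chrW_def nonzero_Basis)
lemma cW_bff[simp]: "k \<in> Basis \<Longrightarrow> chrW q (k,0) (0,a) (0,b) = - f (fst q) * pd k f (fst q) * gF (snd q) a b"
  by (simp add: chrW_def nonzero_Basis)
lemma cW_fbb[simp]: "c \<in> Basis \<Longrightarrow> chrW q (0,c) (i,0) (j,0) = 0"
  by (simp add: chrW_def nonzero_Basis)
lemma cW_fbf[simp]: "c \<in> Basis \<Longrightarrow> i \<in> Basis \<Longrightarrow> b \<in> Basis \<Longrightarrow>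
   chrW q (0,c) (i,0) (0,b) = pd i f (fst q) / f (fst q) * (c \<bullet> b)"
  by (simp add: chrW_def nonzero_Basis)
lemma cW_ffb[simp]: "c \<in> Basis \<Longrightarrow> a \<in> Basis \<Longrightarrow> j \<in> Basis \<Longrightarrow>
   chrW q (0,c) (0,a) (j,0) = pd j f (fst q) / f (fst q) * (c \<bullet> a)"
  by (simp add: chrW_def nonzero_Basis)
lemma cW_fff[simp]: "c \<in> Basis \<Longrightarrow> a \<in> Basis \<Longrightarrow> b \<in> Basis \<Longrightarrow>
   chrW q (0,c) (0,a) (0,b) = christoffel gF (snd q) c a b"
  by (simp add: chrW_def nonzero_Basis)

lemma ricci_bb:
  assumes y: "y \<in> U" and i: "i \<in> Basis" and j: "j \<in> Basis"
  shows "ricci G (x,y) (i,0) (j,0) = - real DIM('b) * pd j (pd i f) x / f x"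
proof -
  have P: "pd j (\<lambda>x'. pd i f x' / f x') x = (pd j (pd i f) x * f x - pd i f x * pd j f x) / (f x)\<^sup>2"
    by (rule pd_divide[OF pdf_d[OF i j] f_d[OF j]]) simp
  have inner: "(\<Sum>d\<in>Basis. - (pd j f x * (c \<bullet> d) * (pd i f x * (d \<bullet> c)) / (f x * f x)))
      = - (pd j f x * pd i f x / (f x * f x))" if c: "c \<in> Basis" for c :: 'b
  proof -
    have "(\<Sum>d\<in>Basis. - (pd j f x * (c \<bullet> d) * (pd i f x * (d \<bullet> c)) / (f x * f x)))
      = (\<Sum>d\<in>Basis. (c \<bullet> d) * (- (pd j f x * pd i f x / (f x * f x))))"
      using c by (intro sum.cong refl) (auto simp: inner_Basis)
    also have "\<dots> = - (pd j f x * pd i f x / (f x * f x))"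
      by (rule sum_delta_inner(1)[OF c, of "\<lambda>_. - (pd j f x * pd i f x / (f x * f x))"])
    finally show ?thesis .
  qed
  have "ricci G (x,y) (i,0) (j,0) = (\<Sum>c\<in>(Basis::'b set). - (pd j f x * pd i f x / (f x * f x))
      - (pd j (pd i f) x * f x - pd i f x * pd j f x) / (f x)\<^sup>2)"
    using y i j by (simp add: ricci_def sum_Basis_prod inner P)
  also have "\<dots> = - real DIM('b) * pd j (pd i f) x / f x"
    by (simp add: field_simps power2_eq_square)
  finally show ?thesis .
qed

lemma hess_bb:
  assumes y: "y \<in> U" and i: "i \<in> Basis" and j: "j \<in> Basis"
  shows "hessian G (\<lambda>q. h (fst q)) (x,y) (i,0) (j,0) = pd i (pd j h) x"
  using y i j
  apply (simp add: hessian_def sum_Basis_prod)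
  done

lemma hess_ff:
  assumes y: "y \<in> U" and a: "a \<in> Basis"
  shows "hessian G (\<lambda>q. h (fst q)) (x,y) (0,a) (0,a) = gF y a a * f x * (\<Sum>k\<in>Basis. pd k f x * pd k h x)"
  using y a by (simp add: hessian_def sum_Basis_prod sum_negf sum_distrib_left mult_ac)

lemma mif[simp]: "(x::real) * (if P then y else 0) = (if P then x * y else 0)"
  "(if P then y else 0) * (x::real) = (if P then y * x else 0)"
  by simp_all

lemma mif2[simp]: "- (if P then (y::real) else 0) = (if P then - y else 0)"
  "(\<Sum>l\<in>A. if P then X l else (0::real)) = (if P then (\<Sum>l\<in>A. X l) else 0)"
  by simp_all

lemma pd_fpdf: assumes i: "i \<in> Basis"
  shows "pd i (\<lambda>x'. - (f x' * pd i f x' * c)) x = - c * (f x * pd i (pd i f) x + (pd i f x)\<^sup>2)"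
proof -
  have d: "(\<lambda>t. f (x + t *\<^sub>R i) * pd i f (x + t *\<^sub>R i)) differentiable (at 0)"
    using f_d[OF i] pdf_d[OF i i] by (rule differentiable_mult)
  have "pd i (\<lambda>x'. - (f x' * pd i f x' * c)) x = pd i (\<lambda>x'. (- c) * (f x' * pd i f x')) x"
    by (simp add: mult_ac)
  also have "\<dots> = (- c) * pd i (\<lambda>x'. f x' * pd i f x') x" using d by (rule pd_cmult)
  also have "\<dots> = - c * (f x * pd i (pd i f) x + (pd i f x)\<^sup>2)"
    using pd_mult[OF f_d[OF i] pdf_d[OF i i]] by (simp add: power2_eq_square)
  finally show ?thesis .
qed

lemma ricci_ff:
  assumes y: "y \<in> U" and a: "a \<in> Basis"
  shows "ricci G (x,y) (0,a) (0,a) = ricci gF y a a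
     - gF y a a * (\<Sum>k\<in>Basis. f x * pd k (pd k f) x + (real DIM('b) - 1) * (pd k f x)\<^sup>2)"
proof -
  have s1: "(\<Sum>i\<in>Basis. pd i f x * (pd i f x * gF y a a)) = gF y a a * (\<Sum>i\<in>Basis. pd i f x * pd i f x)"
    by (simp add: sum_distrib_left mult_ac)
  have s2: "(\<Sum>i\<in>Basis. pd i f x * (pd i f x * (real DIM('b) - 1))) = (real DIM('b) - 1) * (\<Sum>i\<in>Basis. pd i f x * pd i f x)"
    by (simp add: sum_distrib_left mult_ac)
  show ?thesis
  using y a
  apply (simp add: ricci_def sum_Basis_prod pd_fpdf inner_Basis sum.delta sum.delta' sum.distrib sum_subtractf)
  apply (simp add: sum_negf sum.distrib power2_eq_square mult_ac flip: sum_distrib_left)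
  apply (simp only: s1 s2)
  apply (simp add: algebra_simps)
  done
qed

lemma E_bb:
  assumes sol: "\<forall>p\<in>UNIV \<times> U. \<forall>u\<in>Basis. \<forall>v\<in>Basis.
           ricci G p u v + hessian G (\<lambda>q. h (fst q)) p u v = \<rho> * G p u v"
    and y: "y \<in> U" and i: "i \<in> Basis" and j: "j \<in> Basis"
  shows "pd i (pd j h) x - real DIM('b) * pd j (pd i f) x / f x = \<rho> * (i \<bullet> j)"
proof -
  have "ricci G (x,y) (i,0) (j,0) + hessian G (\<lambda>q. h (fst q)) (x,y) (i,0) (j,0) = \<rho> * G (x,y) (i,0) (j,0)"
    using sol y i j by simp
  then show ?thesis using ricci_bb[OF y i j] hess_bb[OF y i j] by simp
qed

lemma E_ff:
  assumes sol: "\<forall>p\<in>UNIV \<times> U. \<forall>u\<in>Basis. \<forall>v\<in>Basis.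
           ricci G p u v + hessian G (\<lambda>q. h (fst q)) p u v = \<rho> * G p u v"
    and y: "y \<in> U" and a: "a \<in> Basis"
  shows "ricci gF y a a - gF y a a * (\<Sum>k\<in>Basis. f x * pd k (pd k f) x + (real DIM('b) - 1) * (pd k f x)\<^sup>2)
     + gF y a a * f x * (\<Sum>k\<in>Basis. pd k f x * pd k h x) = \<rho> * ((f x)\<^sup>2 * gF y a a)"
proof -
  have "ricci G (x,y) (0,a) (0,a) + hessian G (\<lambda>q. h (fst q)) (x,y) (0,a) (0,a) = \<rho> * G (x,y) (0,a) (0,a)"
    using sol y a by simp
  then show ?thesis using ricci_ff[OF y a] hess_ff[OF y a] a by simp
qed

end

lemma Basis_vec_real: "(b::real^'n) \<in> Basis \<longleftrightarrow> (\<exists>j. b = axis j 1)"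
  by (auto simp: Basis_vec_def)

lemma pd_indep:
  assumes "\<forall>x. \<phi> x = \<psi> (x $ i1)" "j \<noteq> i1"
  shows "pd (axis j 1) \<phi> (x::real^'n) = 0"
proof -
  have "(\<lambda>t. \<phi> (x + t *\<^sub>R axis j 1)) = (\<lambda>t. \<psi> (x $ i1))"
    using assms by (auto simp: axis_def)
  then show ?thesis by (simp add: pd_def)
qed

lemma pd_dep:
  assumes "\<forall>x. \<phi> x = \<psi> (x $ i1)"
  shows "pd (axis i1 1) \<phi> (x::real^'n) = deriv \<psi> (x $ i1)"
proof -
  have "(\<lambda>t. \<phi> (x + t *\<^sub>R axis i1 1)) = (\<lambda>t. \<psi> (x $ i1 + t))"
    using assms by (auto simp: axis_def)
  then show ?thesis by (simp add: pd_def deriv_shift0)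
qed

lemma zero_coords:
  fixes \<phi> :: "real^'n \<Rightarrow> real"
  assumes "\<forall>j\<in>T. \<forall>z s. ((\<lambda>s. \<phi> (z + s *\<^sub>R axis j 1)) has_real_derivative 0) (at s)"
  shows "\<phi> x = \<phi> (\<chi> i. if i \<in> T then 0 else x $ i)"
proof -
  have "finite T" by simp
  then show ?thesis using assms
  proof (induction T rule: finite_induct)
    case empty
    then show ?case by (simp add: vec_eq_iff)
  next
    case (insert j T)
    define z where "z = (\<chi> i. if i \<in> T then 0 else x $ i)"
    have "\<phi> x = \<phi> z" using insert unfolding z_def by blast
    also have "\<phi> z = \<phi> (z + (- (z $ j)) *\<^sub>R axis j 1)"
      using DERIV_isconst_all[of "\<lambda>s. \<phi> (z + s *\<^sub>R axis j 1)" 0 "- (z $ j)"] insert.prems by simp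
    also have "z + (- (z $ j)) *\<^sub>R axis j 1 = (\<chi> i. if i \<in> insert j T then 0 else x $ i)"
      by (simp add: z_def vec_eq_iff axis_def)
    finally show ?case .
  qed
qed

lemma deriv_line: "deriv (\<lambda>t. \<Phi> (t *\<^sub>R e)) t = pd e \<Phi> (t *\<^sub>R e)"
proof -
  have "deriv (\<lambda>t. \<Phi> (t *\<^sub>R e)) t = deriv (\<lambda>s. \<Phi> ((t + s) *\<^sub>R e)) 0"
    using deriv_shift0[of "\<lambda>t. \<Phi> (t *\<^sub>R e)" t] by simp
  also have "\<dots> = pd e \<Phi> (t *\<^sub>R e)" by (simp add: pd_def scaleR_add_left)
  finally show ?thesis .
qed

lemma foldr_line:
  fixes \<Phi> :: "'a::euclidean_space \<Rightarrow> real"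
  assumes "set bs \<subseteq> (Basis::real set)"
  shows "foldr pd bs (\<lambda>t. \<Phi> (t *\<^sub>R e)) = (\<lambda>t. foldr pd (map (\<lambda>_. e) bs) \<Phi> (t *\<^sub>R e))"
  using assms
proof (induction bs)
  case Nil
  then show ?case by simp
next
  case (Cons b bs)
  then have b: "b = 1" by simp
  have "foldr pd (b # bs) (\<lambda>t. \<Phi> (t *\<^sub>R e)) = pd 1 (\<lambda>t. foldr pd (map (\<lambda>_. e) bs) \<Phi> (t *\<^sub>R e))"
    using Cons by (simp add: b)
  also have "\<dots> = (\<lambda>t. foldr pd (map (\<lambda>_. e) (b # bs)) \<Phi> (t *\<^sub>R e))"
    by (rule ext) (simp add: pd_def scaleR_add_left)
  finally show ?case .
qed

lemma smooth_line:
  fixes \<Phi> :: "'a::euclidean_space \<Rightarrow> real"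
  assumes sm: "coord_smooth_on UNIV \<Phi>" and e: "e \<in> Basis"
  shows "coord_smooth_on UNIV (\<lambda>t::real. \<Phi> (t *\<^sub>R e))"
  unfolding coord_smooth_on_def
proof (intro allI impI conjI ballI)
  fix bs :: "real list" assume bs: "set bs \<subseteq> Basis"
  have bs': "set (map (\<lambda>_. e) bs) \<subseteq> Basis" using e by auto
  have c: "continuous_on UNIV (foldr pd (map (\<lambda>_. e) bs) \<Phi>)"
    using sm bs' unfolding coord_smooth_on_def by blast
  show "continuous_on UNIV (foldr pd bs (\<lambda>t. \<Phi> (t *\<^sub>R e)))"
    unfolding foldr_line[OF bs]
    by (rule continuous_on_compose2[OF c]) (auto intro!: continuous_intros)
  fix b :: real and t :: real assume b: "b \<in> Basis"
  have d: "(\<lambda>s. foldr pd (map (\<lambda>_. e) bs) \<Phi> (t *\<^sub>R e + s *\<^sub>R e)) differentiable (at 0)"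
    using sm bs' e unfolding coord_smooth_on_def by blast
  show "(\<lambda>s. foldr pd bs (\<lambda>t. \<Phi> (t *\<^sub>R e)) (t + s *\<^sub>R b)) differentiable (at 0)"
    unfolding foldr_line[OF bs] using b d by (simp add: scaleR_add_left)
qed

theorem theorem3:
  fixes f h :: "real^'n \<Rightarrow> real" and f1 :: "real \<Rightarrow> real"
    and gF :: "real^'m \<Rightarrow> real^'m \<Rightarrow> real^'m \<Rightarrow> real" and U :: "(real^'m) set"
    and lamF \<rho> :: real and i1 :: 'n
  assumes "CARD('n) \<ge> 2"
    and "U \<noteq> {}" and "riemannian_metric_on U gF"
    and "\<forall>y\<in>U. \<forall>u\<in>Basis. \<forall>v\<in>Basis. ricci gF y u v = lamF * gF y u v"
    and "coord_smooth_on UNIV f" and "coord_smooth_on UNIV h" and "\<forall>x. f x > 0"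
    and "\<forall>p\<in>UNIV \<times> U. \<forall>u\<in>Basis. \<forall>v\<in>Basis.
           ricci (warped_metric f gF) p u v + hessian (warped_metric f gF) (\<lambda>q. h (fst q)) p u v
             = \<rho> * warped_metric f gF p u v"
    and "\<forall>x. f x = f1 (x $ i1)"
  shows "\<exists>a b :: 'n \<Rightarrow> real. \<exists>h1 :: real \<Rightarrow> real. coord_smooth_on UNIV h1 \<and>
     (\<forall>x. h x = h1 (x $ i1) + (\<Sum>k\<in>UNIV - {i1}. \<rho>/2 * (x $ k)^2 + a k * x $ k + b k)) \<and>
     (\<forall>t. lamF - f1 t * deriv (deriv f1) t - (real CARD('m) - 1) * (deriv f1 t)^2
            + f1 t * deriv f1 t * deriv h1 t = \<rho> * (f1 t)^2 \<and>
          f1 t * deriv (deriv h1) t - real CARD('m) * deriv (deriv f1) t = \<rho> * f1 t)"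
proof -
  interpret W: WP f h gF U
    using assms(3,5,6,7) by unfold_locales auto
  note sol = assms(8) and f1 = assms(9)
  obtain y0 where y0: "y0 \<in> U" using assms(2) by auto
  obtain a0 :: "real^'m" where a0: "a0 \<in> Basis" by (meson ex_in_conv nonempty_Basis)
  define e where "e = (axis i1 1 :: real^'n)"
  have eB: "e \<in> Basis" by (auto simp: e_def Basis_vec_real)
  have fk0: "pd k f x = 0" if "k \<in> Basis" "k \<noteq> e" for k x
  proof -
    from that(1) obtain j where j: "k = axis j 1" unfolding Basis_vec_real by blast
    have "j \<noteq> i1" using that(2) j unfolding e_def by auto
    then show ?thesis using pd_indep[OF f1 \<open>j \<noteq> i1\<close>, of x] j by simp
  qed
  have fe': "\<forall>x. pd e f x = deriv f1 (x $ i1)" unfolding e_def using pd_dep[OF f1] by blast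
  have fe: "pd e f x = deriv f1 (x $ i1)" for x using fe' by blast
  have fee: "pd e (pd e f) x = deriv (deriv f1) (x $ i1)" for x
    using pd_dep[OF fe', of x] unfolding e_def by simp
  have fjk0: "pd j (pd i f) x = 0" if "i \<in> Basis" "j \<in> Basis" "\<not> (i = e \<and> j = e)" for i j x
  proof (cases "i = e")
    case False
    then have "pd i f = (\<lambda>_. 0)" using fk0 that(1) by blast
    then show ?thesis by simp
  next
    case True
    then have "j \<noteq> e" using that(3) by blast
    from that(2) obtain j' where j': "j = axis j' 1" unfolding Basis_vec_real by blast
    have "j' \<noteq> i1" using \<open>j \<noteq> e\<close> j' unfolding e_def by auto
    show ?thesis using pd_indep[OF fe' \<open>j' \<noteq> i1\<close>, of x] j' True by simp
  qed
  have hij: "pd i (pd j h) x = \<rho> * (i \<bullet> j)" if "i \<in> Basis" "j \<in> Basis" "\<not> (i = e \<and> j = e)" for i j x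
    using W.E_bb[OF sol y0 that(1,2), of x] fjk0[OF that] by simp
  have hee: "pd e (pd e h) x - real CARD('m) * deriv (deriv f1) (x $ i1) / f1 (x $ i1) = \<rho>" for x
    using W.E_bb[OF sol y0 eB eB, of x] fee f1 eB by simp
  define h1 where "h1 = (\<lambda>t. h (t *\<^sub>R e))"
  have te: "(t *\<^sub>R e) $ i1 = t" for t by (simp add: e_def)
  have ei: "e $ i1 = 1" by (simp add: e_def)
  have f1t: "f1 t = f (t *\<^sub>R e)" for t by (simp only: f1[rule_format] te)
  have h1d: "deriv h1 t = pd e h (t *\<^sub>R e)" for t unfolding h1_def by (rule deriv_line)
  have h1d': "deriv h1 = (\<lambda>t. pd e h (t *\<^sub>R e))" using h1d by (intro ext)
  have h1dd: "deriv (deriv h1) t = pd e (pd e h) (t *\<^sub>R e)" for t unfolding h1d' by (rule deriv_line)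
  have f1d: "deriv f1 t = pd e f (t *\<^sub>R e)" for t using fe[of "t *\<^sub>R e"] ei by simp
  have f1pos: "f1 t > 0" for t using assms(7) f1t by simp
  have ode2: "f1 t * deriv (deriv h1) t - real CARD('m) * deriv (deriv f1) t = \<rho> * f1 t" for t
  proof -
    have "deriv (deriv h1) t - real CARD('m) * deriv (deriv f1) t / f1 t = \<rho>"
      using hee[of "t *\<^sub>R e"] ei h1dd by simp
    then show ?thesis using f1pos[of t] by (simp add: field_simps)
  qed
  have ode1: "lamF - f1 t * deriv (deriv f1) t - (real CARD('m) - 1) * (deriv f1 t)^2
            + f1 t * deriv f1 t * deriv h1 t = \<rho> * (f1 t)^2" for t
  proof -
    let ?x = "t *\<^sub>R e"
    let ?g = "gF y0 a0 a0"
    have gpos: "?g > 0" by (rule W.gF_diag_pos[OF y0 a0])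
    have S1: "(\<Sum>k\<in>Basis. f ?x * pd k (pd k f) ?x + (real DIM(real^'m) - 1) * (pd k f ?x)\<^sup>2)
       = f ?x * pd e (pd e f) ?x + (real DIM(real^'m) - 1) * (pd e f ?x)\<^sup>2"
    proof -
      have "(\<Sum>k\<in>Basis - {e}. f ?x * pd k (pd k f) ?x + (real DIM(real^'m) - 1) * (pd k f ?x)\<^sup>2) = 0"
        by (rule sum.neutral) (auto simp: fk0 fjk0)
      then show ?thesis by (simp add: sum.remove[OF finite_Basis eB])
    qed
    have S2: "(\<Sum>k\<in>Basis. pd k f ?x * pd k h ?x) = pd e f ?x * pd e h ?x"
    proof -
      have "(\<Sum>k\<in>Basis - {e}. pd k f ?x * pd k h ?x) = 0"
        by (rule sum.neutral) (auto simp: fk0)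
      then show ?thesis by (simp add: sum.remove[OF finite_Basis eB])
    qed
    have R: "ricci gF y0 a0 a0 = lamF * ?g" using assms(4) y0 a0 by blast
    have "lamF * ?g - ?g * (f1 t * deriv (deriv f1) t + (real CARD('m) - 1) * (deriv f1 t)\<^sup>2)
       + ?g * f1 t * (deriv f1 t * deriv h1 t) = \<rho> * ((f1 t)\<^sup>2 * ?g)"
      using W.E_ff[OF sol y0 a0, of ?x] unfolding S1 S2 R
      by (simp add: f1t fee ei h1d f1d)
    then have "?g * (lamF - f1 t * deriv (deriv f1) t - (real CARD('m) - 1) * (deriv f1 t)^2
            + f1 t * deriv f1 t * deriv h1 t) = ?g * (\<rho> * (f1 t)^2)"
      by (simp add: algebra_simps)
    then show ?thesis using gpos by simp
  qed
  define a where "a = (\<lambda>j. pd (axis j 1) h 0)"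
  have pdh_lin: "pd (axis j 1) h x = \<rho> * x $ j + a j" if "j \<noteq> i1" for j x
  proof -
    let ?ej = "axis j 1 :: real^'n"
    have ejB: "?ej \<in> Basis" by (auto simp: Basis_vec_real)
    have eje: "?ej \<noteq> e" using that by (simp add: e_def axis_eq_axis)
    define c0 where "c0 = (\<lambda>x. pd ?ej h x - \<rho> * x $ j)"
    have "c0 x = c0 (\<chi> i. if i \<in> UNIV then 0 else x $ i)"
    proof (rule zero_coords, intro ballI allI)
      fix l z s
      have lB: "axis l 1 \<in> (Basis :: (real^'n) set)" by (auto simp: Basis_vec_real)
      have d1: "((\<lambda>s. pd ?ej h (z + s *\<^sub>R axis l 1)) has_real_derivative
          pd (axis l 1) (pd ?ej h) (z + s *\<^sub>R axis l 1)) (at s)"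
        by (rule line_deriv) (rule W.pdh_d[OF ejB lB])
      have d1': "pd (axis l 1) (pd ?ej h) (z + s *\<^sub>R axis l 1) = \<rho> * (axis l 1 \<bullet> ?ej)"
        using hij[OF lB ejB] eje by blast
      have d2: "((\<lambda>s. \<rho> * (z + s *\<^sub>R axis l 1) $ j) has_real_derivative \<rho> * (axis l 1 \<bullet> ?ej)) (at s)"
      proof -
        have "(\<lambda>s. \<rho> * (z + s *\<^sub>R axis l 1) $ j) = (\<lambda>s. \<rho> * (z $ j) + s * (\<rho> * (axis l 1 \<bullet> ?ej)))"
        proof
          fix s
          have "(axis l 1 :: real^'n) \<bullet> ?ej = (if l = j then 1 else 0)" by (simp add: inner_axis_axis)
          moreover have "(z + s *\<^sub>R axis l 1) $ j = z $ j + s * (if l = j then 1 else 0)"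
            by (simp add: axis_def)
          ultimately show "\<rho> * (z + s *\<^sub>R axis l 1) $ j = \<rho> * (z $ j) + s * (\<rho> * (axis l 1 \<bullet> ?ej))"
            by (simp add: algebra_simps)
        qed
        then show ?thesis by (auto intro!: derivative_eq_intros)
      qed
      show "((\<lambda>s. c0 (z + s *\<^sub>R axis l 1)) has_real_derivative 0) (at s)"
        unfolding c0_def using DERIV_diff[OF d1 d2] d1' by simp
    qed
    moreover have "(\<chi> i. if i \<in> UNIV then 0 else x $ i) = (0::real^'n)" by (simp add: vec_eq_iff)
    ultimately have "c0 x = c0 0" by simp
    then show ?thesis by (simp add: c0_def a_def)
  qed
  define A where "A = (UNIV - {i1} :: 'n set)"
  define \<omega> where "\<omega> = (\<lambda>x. h x - (\<Sum>k\<in>A. \<rho>/2 * (x $ k)^2 + a k * x $ k + 0))"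
  have om: "\<omega> x = \<omega> (\<chi> i. if i \<in> A then 0 else x $ i)" for x
  proof (rule zero_coords, intro ballI allI)
    fix j z s assume j: "j \<in> A"
    then have ji: "j \<noteq> i1" by (simp add: A_def)
    let ?ej = "axis j 1 :: real^'n"
    have ejB: "?ej \<in> Basis" by (auto simp: Basis_vec_real)
    have d1: "((\<lambda>s. h (z + s *\<^sub>R ?ej)) has_real_derivative pd ?ej h (z + s *\<^sub>R ?ej)) (at s)"
      by (rule line_deriv) (rule W.h_d[OF ejB])
    have d1': "pd ?ej h (z + s *\<^sub>R ?ej) = \<rho> * (z $ j + s) + a j"
      using pdh_lin[OF ji] by (simp add: axis_def)
    have eqs: "(\<lambda>s. \<Sum>k\<in>A. \<rho>/2 * ((z + s *\<^sub>R ?ej) $ k)^2 + a k * (z + s *\<^sub>R ?ej) $ k + 0)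
       = (\<lambda>s. (\<rho>/2 * (z $ j + s)^2 + a j * (z $ j + s) + 0) + (\<Sum>k\<in>A - {j}. \<rho>/2 * (z $ k)^2 + a k * z $ k + 0))"
    proof
      fix s
      have "(\<Sum>k\<in>A. \<rho>/2 * ((z + s *\<^sub>R ?ej) $ k)^2 + a k * (z + s *\<^sub>R ?ej) $ k + 0)
        = (\<rho>/2 * ((z + s *\<^sub>R ?ej) $ j)^2 + a j * (z + s *\<^sub>R ?ej) $ j + 0)
          + (\<Sum>k\<in>A - {j}. \<rho>/2 * ((z + s *\<^sub>R ?ej) $ k)^2 + a k * (z + s *\<^sub>R ?ej) $ k + 0)"
        using j by (simp add: sum.remove)
      also have "(\<Sum>k\<in>A - {j}. \<rho>/2 * ((z + s *\<^sub>R ?ej) $ k)^2 + a k * (z + s *\<^sub>R ?ej) $ k + 0)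
         = (\<Sum>k\<in>A - {j}. \<rho>/2 * (z $ k)^2 + a k * z $ k + 0)"
        by (rule sum.cong) (auto simp: axis_def)
      finally show "(\<Sum>k\<in>A. \<rho>/2 * ((z + s *\<^sub>R ?ej) $ k)^2 + a k * (z + s *\<^sub>R ?ej) $ k + 0)
       = (\<rho>/2 * (z $ j + s)^2 + a j * (z $ j + s) + 0) + (\<Sum>k\<in>A - {j}. \<rho>/2 * (z $ k)^2 + a k * z $ k + 0)"
        by (simp add: axis_def)
    qed
    have d2: "((\<lambda>s. (\<rho>/2 * (z $ j + s)^2 + a j * (z $ j + s) + 0) + (\<Sum>k\<in>A - {j}. \<rho>/2 * (z $ k)^2 + a k * z $ k + 0))
       has_real_derivative \<rho> * (z $ j + s) + a j) (at s)"
      by (auto intro!: derivative_eq_intros simp: algebra_simps)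
    show "((\<lambda>s. \<omega> (z + s *\<^sub>R ?ej)) has_real_derivative 0) (at s)"
    proof -
      have "(\<lambda>s. \<omega> (z + s *\<^sub>R ?ej)) = (\<lambda>s. h (z + s *\<^sub>R ?ej) -
         ((\<rho>/2 * (z $ j + s)^2 + a j * (z $ j + s) + 0) + (\<Sum>k\<in>A - {j}. \<rho>/2 * (z $ k)^2 + a k * z $ k + 0)))"
        unfolding \<omega>_def using eqs by (metis (no_types, lifting))
      then show ?thesis using DERIV_diff[OF d1 d2] d1' by simp
    qed
  qed
  have hform: "h x = h1 (x $ i1) + (\<Sum>k\<in>UNIV - {i1}. \<rho>/2 * (x $ k)^2 + a k * x $ k + 0)" for x
  proof -
    have v: "(\<chi> i. if i \<in> A then 0 else x $ i) = (x $ i1) *\<^sub>R e"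
      by (simp add: vec_eq_iff A_def e_def axis_def)
    have z: "(\<Sum>k\<in>A. \<rho>/2 * (((x $ i1) *\<^sub>R e) $ k)^2 + a k * ((x $ i1) *\<^sub>R e) $ k + 0) = 0"
      by (rule sum.neutral) (auto simp: A_def e_def axis_def)
    have ek: "e $ k = 0" if "k \<in> A" for k using that by (simp add: A_def e_def axis_def)
    have "\<omega> x = h1 (x $ i1)" using om[of x] unfolding v by (simp add: \<omega>_def ek h1_def)
    then show ?thesis by (simp add: \<omega>_def A_def)
  qed
  show ?thesis
  proof (rule exI[of _ a], rule exI[of _ "\<lambda>_. 0"], rule exI[of _ h1], intro conjI allI)
    show "coord_smooth_on UNIV h1" unfolding h1_def by (rule smooth_line[OF assms(6) eB])
  qed (use hform ode1 ode2 in simp_all)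
qed

end
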